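(* Let $\mathcal{D}$ be a distribution on $\mathbb{R}^d\times\mathbb{R}$ with $\|\mathbf{x}\|_2\le1$ and $|y|\le B$ almost surely. The GAERR algorithm (with any sampling distribution $(q_1,\dots,q_d)$ and budget $k$) generates gradient estimates satisfying, for all $t$, $$\mathbb{E}_{\mathcal{D},A}\big[\|\widetilde{\mathbf{g}}_t\|_2^2\big]\le 4B^2\Big(\frac1k\mathbb{E}_{\mathcal{D},A}\big[\|\widetilde{\mathbf{x}}_{t,r}\|_2^2\big]+1\Big).$$
   Context: Algorithm GAERR (parameters $B,\eta>0$, probabilities $q_i$ summing to $1$, integer budget $k>0$; i.i.d. examples $(\mathbf{x}_t,y_t)\sim\mathcal{D}$): initialize $\mathbf{w}_1\ne0$, $\|\mathbf{w}_1\|_2\le B$. For each $t$: for $r=1..k$ draw $i_{t,r}$ with probability $q_{i_{t,r}}$ and set $\widetilde{\mathbf{x}}_{t,r}=\frac{1}{q_{i_{t,r}}}\mathbf{x}_t[i_{t,r}]\mathbf{e}_{i_{t,r}}$ (the $\widetilde{\mathbf{x}}_{t,r}$, $r=1..k$, are identically distributed); $\widetilde{\mathbf{x}}_t=\frac1k\sum_r\widetilde{\mathbf{x}}_{t,r}$; draw $j_t$ with probability $p_j=w_{t,j}^2/\|\mathbf{w}_t\|_2^2$ and set $\widetilde\phi_t=\frac{w_{t,j_t}}{p_{j_t}}\mathbf{x}_t[j_t]-y_t$; $\widetilde{\mathbf{g}}_t=\widetilde\phi_t\widetilde{\mathbf{x}}_t$; $\mathbf{v}_t=\mathbf{w}_t-\eta\widetilde{\mathbf{g}}_t$;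 $\mathbf{w}_{t+1}=\mathbf{v}_tB/\max\{\|\mathbf{v}_t\|_2,B\}$. All draws independent. $\mathbb{E}_{\mathcal{D},A}$ is expectation over examples and algorithm randomness. *)

theory Defs
  imports "HOL-Analysis.Analysis" "HOL-Probability.Probability"
begin

text \<open>GAERR, vectors in R^d modelled as real^'d with a finite index type 'd.
  The sampling distribution (q_1,...,q_d) is a pmf Q on 'd, q_i = pmf Q i.\<close>

definition xt_r :: "'d::finite pmf \<Rightarrow> real^'d \<Rightarrow> 'd \<Rightarrow> real^'d" where
  "xt_r Q x i = ((1 / pmf Q i) * x $ i) *\<^sub>R axis i 1"

definition xt :: "'d::finite pmf \<Rightarrow> nat \<Rightarrow> real^'d \<Rightarrow> (nat \<Rightarrow> 'd) \<Rightarrow> real^'d" where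
  "xt Q k x I = (1 / real k) *\<^sub>R (\<Sum>r<k. xt_r Q x (I r))"

definition pj :: "real^'d::finite \<Rightarrow> 'd \<Rightarrow> real" where
  "pj w j = (w $ j)^2 / (norm w)^2"

definition jdist :: "real^'d::finite \<Rightarrow> 'd pmf" where
  "jdist w = embed_pmf (pj w)"

definition phi_t :: "real^'d::finite \<Rightarrow> real^'d \<Rightarrow> real \<Rightarrow> 'd \<Rightarrow> real" where
  "phi_t w x y j = (w $ j / pj w j) * x $ j - y"

definition g_t :: "'d::finite pmf \<Rightarrow> nat \<Rightarrow> real^'d \<Rightarrow> real^'d \<Rightarrow> real \<Rightarrow> (nat \<Rightarrow> 'd) \<Rightarrow> 'd \<Rightarrow> real^'d" where
  "g_t Q k w x y I j = phi_t w x y j *\<^sub>R xt Q k x I"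

text \<open>the k index draws i_{t,1..k} (0-based: r < k), i.i.d. with law Q\<close>
definition idx_pmf :: "'d::finite pmf \<Rightarrow> nat \<Rightarrow> (nat \<Rightarrow> 'd) pmf" where
  "idx_pmf Q k = Pi_pmf {..<k} undefined (\<lambda>_. Q)"

text \<open>all algorithm randomness of one round, given w_t: the indices and j_t, independent\<close>
definition alg_pmf :: "'d::finite pmf \<Rightarrow> nat \<Rightarrow> real^'d \<Rightarrow> ((nat \<Rightarrow> 'd) \<times> 'd) pmf" where
  "alg_pmf Q k w = pair_pmf (idx_pmf Q k) (jdist w)"

definition next_w :: "real \<Rightarrow> real \<Rightarrow> 'd::finite pmf \<Rightarrow> nat \<Rightarrow> real^'d \<Rightarrow> real^'d \<Rightarrow> real
    \<Rightarrow> (nat \<Rightarrow> 'd) \<Rightarrow> 'd \<Rightarrow> real^'d" where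
  "next_w B \<eta> Q k w x y I j =
     (let v = w - \<eta> *\<^sub>R g_t Q k w x y I j in (B / max (norm v) B) *\<^sub>R v)"

definition step :: "((real^'d) \<times> real) measure \<Rightarrow> 'd::finite pmf \<Rightarrow> nat \<Rightarrow> real \<Rightarrow> real
    \<Rightarrow> real^'d \<Rightarrow> (real^'d) measure" where
  "step D Q k \<eta> B w = Giry_Monad.bind D (\<lambda>(x, y).
      distr (measure_pmf (alg_pmf Q k w)) borel (\<lambda>(I, j). next_w B \<eta> Q k w x y I j))"

text \<open>w_law ... n is the law of the iterate w_{n+1}\<close>
primrec w_law :: "((real^'d) \<times> real) measure \<Rightarrow> 'd::finite pmf \<Rightarrow> nat \<Rightarrow> real \<Rightarrow> real
    \<Rightarrow> real^'d \<Rightarrow> nat \<Rightarrow> (real^'d) measure" where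
  "w_law D Q k \<eta> B w1 0 = return borel w1"
| "w_law D Q k \<eta> B w1 (Suc n) = Giry_Monad.bind (w_law D Q k \<eta> B w1 n) (step D Q k \<eta> B)"

end

theory Submission imports Defs begin
lemma borel_measurable_vec_nth_comp[measurable (raw)]:
  fixes f :: "'a \<Rightarrow> real^'n"
  shows "f \<in> borel_measurable M \<Longrightarrow> (\<lambda>x. f x $ j) \<in> borel_measurable M"
  by (rule measurable_compose[of f M borel]) (auto intro!: borel_measurable_continuous_onI continuous_intros)

lemma integral_pair_pmf_finite:
  fixes F :: "'a \<times> 'b \<Rightarrow> real"
  assumes A: "finite (set_pmf A)" and B: "finite (set_pmf B)"
  shows "(\<integral>x. F x \<partial>pair_pmf A B) = (\<integral>a. (\<integral>b. F (a,b) \<partial>B) \<partial>A)"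
proof -
  have "(\<integral>x. F x \<partial>pair_pmf A B) = (\<Sum>x\<in>set_pmf A \<times> set_pmf B. F x * pmf (pair_pmf A B) x)"
    using A B by (intro integral_measure_pmf_real) auto
  also have "\<dots> = (\<Sum>a\<in>set_pmf A. \<Sum>b\<in>set_pmf B. F (a,b) * pmf B b * pmf A a)"
    unfolding sum.cartesian_product by (intro sum.cong refl) (auto simp: pmf_pair mult_ac)
  also have "\<dots> = (\<Sum>a\<in>set_pmf A. (\<integral>b. F (a,b) \<partial>B) * pmf A a)"
    using B by (intro sum.cong refl) (simp add: integral_measure_pmf_real[where A="set_pmf B"] sum_distrib_right)
  also have "\<dots> = (\<integral>a. (\<integral>b. F (a,b) \<partial>B) \<partial>A)"
    using A by (intro integral_measure_pmf_real[symmetric]) auto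
  finally show ?thesis .
qed

lemma finite_set_Pi_pmf_fin:
  fixes Q :: "'d::finite pmf"
  shows "finite (set_pmf (Pi_pmf {..<(n::nat)} d (\<lambda>_. Q)))"
  by (subst set_Pi_pmf) (auto intro!: finite_PiE_dflt)

lemma Pi_pmf_Suc:
  "Pi_pmf {..<Suc n} d (\<lambda>_. Q) = map_pmf (\<lambda>(y,f). f(n:=y)) (pair_pmf Q (Pi_pmf {..<n} d (\<lambda>_. Q)))"
  unfolding lessThan_Suc by (subst Pi_pmf_insert) auto

lemma pi_moments:
  fixes h :: "'d::finite \<Rightarrow> real" and Q :: "'d pmf"
  shows "(\<integral>f. (\<Sum>r<n. h (f r)) \<partial>Pi_pmf {..<n} d (\<lambda>_. Q)) = real n * (\<integral>i. h i \<partial>Q) \<and>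
         (\<integral>f. (\<Sum>r<n. h (f r))^2 \<partial>Pi_pmf {..<n} d (\<lambda>_. Q)) =
            real n * (\<integral>i. (h i)^2 \<partial>Q) + (real n * real n - real n) * (\<integral>i. h i \<partial>Q)^2"
proof (induction n)
  case 0
  then show ?case by simp
next
  case (Suc n)
  define P where "P = Pi_pmf {..<n} d (\<lambda>_. Q)"
  define S where "S = (\<lambda>f. \<Sum>r<n. h (f r))"
  define a where "a = (\<integral>i. h i \<partial>Q)"
  define b where "b = (\<integral>i. (h i)^2 \<partial>Q)"
  have finP: "finite (set_pmf P)" unfolding P_def by (rule finite_set_Pi_pmf_fin)
  have finQ: "finite (set_pmf Q)" by simp
  have IH1: "(\<integral>f. S f \<partial>P) = real n * a" and IH2: "(\<integral>f. (S f)^2 \<partial>P) = real n * b + (real n * real n - real n) * a^2"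
    using Suc.IH unfolding P_def S_def a_def b_def by auto
  have sumeq: "(\<Sum>r<Suc n. h ((f(n:=y)) r)) = h y + S f" for f y
    unfolding S_def by (simp add: add.commute)
  have int: "integrable (measure_pmf P) g" for g :: "_ \<Rightarrow> real"
    by (rule integrable_measure_pmf_finite[OF finP])
  have intQ: "integrable (measure_pmf Q) g" for g :: "_ \<Rightarrow> real"
    by (rule integrable_measure_pmf_finite[OF finQ])
  have E1: "(\<integral>f. (\<Sum>r<Suc n. h (f r)) \<partial>Pi_pmf {..<Suc n} d (\<lambda>_. Q)) = (\<integral>y. (\<integral>f. h y + S f \<partial>P) \<partial>Q)"
    unfolding Pi_pmf_Suc P_def[symmetric]
    by (simp add: integral_pair_pmf_finite[OF finQ finP] case_prod_beta S_def add.commute)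
  also have "\<dots> = (\<integral>y. h y + real n * a \<partial>Q)"
    by (intro Bochner_Integration.integral_cong refl) (simp add: Bochner_Integration.integral_add[OF int int] IH1)
  also have "\<dots> = real (Suc n) * a"
    by (simp add: Bochner_Integration.integral_add[OF intQ intQ] a_def algebra_simps)
  finally have R1: "(\<integral>f. (\<Sum>r<Suc n. h (f r)) \<partial>Pi_pmf {..<Suc n} d (\<lambda>_. Q)) = real (Suc n) * a" .
  have E2: "(\<integral>f. (\<Sum>r<Suc n. h (f r))^2 \<partial>Pi_pmf {..<Suc n} d (\<lambda>_. Q)) = (\<integral>y. (\<integral>f. (h y)^2 + 2 * h y * S f + (S f)^2 \<partial>P) \<partial>Q)"
    unfolding Pi_pmf_Suc P_def[symmetric]
    by (simp add: integral_pair_pmf_finite[OF finQ finP] case_prod_beta S_def power2_sum add_ac mult_ac)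
  also have "\<dots> = (\<integral>y. (h y)^2 + 2 * real n * a * h y + (real n * b + (real n * real n - real n) * a^2) \<partial>Q)"
    by (intro Bochner_Integration.integral_cong refl)
       (simp add: Bochner_Integration.integral_add[OF int int] IH1 IH2)
  also have "\<dots> = b + 2 * real n * a * a + (real n * b + (real n * real n - real n) * a^2)"
    by (simp add: Bochner_Integration.integral_add[OF intQ intQ] a_def b_def)
  also have "\<dots> = real (Suc n) * b + (real (Suc n) * real (Suc n) - real (Suc n)) * a^2"
    by (simp add: algebra_simps power2_eq_square)
  finally show ?case using R1 unfolding a_def b_def by simp
qed
lemma norm_sq_vec: "(norm (v::real^'n))^2 = (\<Sum>c\<in>UNIV. (v $ c)^2)"
  unfolding norm_vec_def L2_set_def by (simp add: sum_nonneg)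

definition Exr :: "'d::finite pmf \<Rightarrow> real^'d \<Rightarrow> real" where
  "Exr Q x = (\<Sum>i\<in>UNIV. pmf Q i * (norm (xt_r Q x i))^2)"

lemma xt_r_comp: "xt_r Q x i $ c = (if c = i then x $ c / pmf Q c else 0)"
  unfolding xt_r_def axis_def by simp

lemma L_var:
  fixes Q :: "'d::finite pmf"
  assumes k: "k > 0" and x: "norm x \<le> 1"
  shows "(\<integral>I. (norm (xt Q k x I))^2 \<partial>idx_pmf Q k) \<le> Exr Q x / real k + 1"
proof -
  define h where "h = (\<lambda>c i. xt_r Q x i $ c)"
  define a where "a = (\<lambda>c. \<integral>i. h c i \<partial>Q)"
  define b where "b = (\<lambda>c. \<integral>i. (h c i)^2 \<partial>Q)"
  have finP: "finite (set_pmf (idx_pmf Q k))" unfolding idx_pmf_def by (rule finite_set_Pi_pmf_fin)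
  have int: "integrable (measure_pmf (idx_pmf Q k)) g" for g :: "_ \<Rightarrow> real"
    by (rule integrable_measure_pmf_finite[OF finP])
  have comp: "xt Q k x I $ c = (1 / real k) * (\<Sum>r<k. h c (I r))" for I c
    unfolding xt_def h_def by (simp add: sum_component)
  have "(\<integral>I. (norm (xt Q k x I))^2 \<partial>idx_pmf Q k) =
        (\<integral>I. (\<Sum>c\<in>UNIV. (1 / real k)^2 * (\<Sum>r<k. h c (I r))^2) \<partial>idx_pmf Q k)"
    by (simp add: norm_sq_vec comp power_divide)
  also have "\<dots> = (\<Sum>c\<in>UNIV. (1 / real k)^2 * (\<integral>I. (\<Sum>r<k. h c (I r))^2 \<partial>idx_pmf Q k))"
    by (simp add: Bochner_Integration.integral_sum[OF int])
  also have "\<dots> = (\<Sum>c\<in>UNIV. (1 / real k)^2 * (real k * b c + (real k * real k - real k) * (a c)^2))"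
    unfolding idx_pmf_def a_def b_def by (intro sum.cong refl) (simp add: pi_moments[THEN conjunct2])
  also have "\<dots> = (\<Sum>c\<in>UNIV. b c / real k + (1 - 1 / real k) * (a c)^2)"
    using k by (intro sum.cong refl) (simp add: field_simps power2_eq_square)
  also have "\<dots> = (\<Sum>c\<in>UNIV. b c) / real k + (1 - 1 / real k) * (\<Sum>c\<in>UNIV. (a c)^2)"
    by (simp add: sum_divide_distrib sum_distrib_left sum.distrib)
  also have "\<dots> \<le> Exr Q x / real k + 1"
  proof (rule add_mono)
    have "(\<Sum>c\<in>UNIV. b c) = (\<integral>i. (\<Sum>c\<in>UNIV. (h c i)^2) \<partial>Q)"
      unfolding b_def by (simp add: Bochner_Integration.integral_sum integrable_measure_pmf_finite)
    also have "\<dots> = (\<integral>i. (norm (xt_r Q x i))^2 \<partial>Q)"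
      unfolding h_def norm_sq_vec ..
    also have "\<dots> = Exr Q x"
      unfolding Exr_def by (subst integral_measure_pmf_real[where A=UNIV]) (auto simp: mult_ac)
    finally show "(\<Sum>c\<in>UNIV. b c) / real k \<le> Exr Q x / real k" by simp
  next
    have ac: "(a c)^2 \<le> (x $ c)^2" for c
    proof -
      have "a c = (\<Sum>i\<in>UNIV. h c i * pmf Q i)"
        unfolding a_def by (subst integral_measure_pmf_real[where A=UNIV]) auto
      also have "\<dots> = x $ c / pmf Q c * pmf Q c"
      proof -
        have "(\<lambda>i. h c i * pmf Q i) = (\<lambda>i. if i = c then x $ c / pmf Q c * pmf Q c else 0)"
          by (auto simp: h_def xt_r_comp)
        show ?thesis unfolding \<open>(\<lambda>i. h c i * pmf Q i) = _\<close> by simp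
      qed
      finally show ?thesis
        by (cases "pmf Q c = 0") auto
    qed
    have "(\<Sum>c\<in>UNIV. (a c)^2) \<le> (\<Sum>c\<in>UNIV. (x $ c)^2)"
      by (intro sum_mono ac)
    also have "\<dots> = (norm x)^2" by (simp add: norm_sq_vec)
    also have "\<dots> \<le> 1" using x by (simp add: power_le_one)
    finally have s1: "(\<Sum>c\<in>UNIV. (a c)^2) \<le> 1" .
    have "0 \<le> 1 - 1 / real k" "1 - 1 / real k \<le> 1" using k by (auto simp: field_simps)
    then show "(1 - 1 / real k) * (\<Sum>c\<in>UNIV. (a c)^2) \<le> 1"
      using s1 by (metis mult_le_one sum_nonneg zero_le_power2)
  qed
  finally show ?thesis .
qed
lemma pj_sum: "w \<noteq> 0 \<Longrightarrow> (\<Sum>j\<in>UNIV. pj w j) = 1"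
  unfolding pj_def by (simp add: sum_divide_distrib[symmetric] norm_sq_vec[symmetric])

lemma pmf_jdist: assumes "w \<noteq> 0" shows "pmf (jdist w) j = pj w j"
  unfolding jdist_def
proof (rule pmf_embed_pmf)
  show "0 \<le> pj w x" for x unfolding pj_def by simp
  show "(\<integral>\<^sup>+x. ennreal (pj w x) \<partial>count_space UNIV) = 1"
    using pj_sum[OF assms] by (simp add: nn_integral_count_space_finite pj_def sum_ennreal)
qed

lemma L_phi:
  fixes w x :: "real^'d::finite"
  assumes w: "norm w \<le> B" and x: "norm x \<le> 1" and y: "\<bar>y\<bar> \<le> B"
  shows "(\<integral>\<^sup>+j. ennreal ((phi_t w x y j)^2) \<partial>jdist w) \<le> ennreal (4 * B^2)"
proof (cases "w = 0")
  case True
  have "phi_t w x y j = - y" for j using True by (simp add: phi_t_def)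
  then have "(\<integral>\<^sup>+j. ennreal ((phi_t w x y j)^2) \<partial>jdist w) = ennreal (y^2)"
    by (simp add: measure_pmf.emeasure_space_1)
  also have "\<dots> \<le> ennreal (4 * B^2)"
  proof (intro ennreal_leI)
    have "\<bar>y\<bar>^2 \<le> B^2" using y by (intro power_mono) auto
    then have "y^2 \<le> B^2" by simp
    then show "y^2 \<le> 4 * B^2" using zero_le_power2[of B] by linarith
  qed
  finally show ?thesis .
next
  case False
  have "(\<integral>\<^sup>+j. ennreal ((phi_t w x y j)^2) \<partial>jdist w) = (\<Sum>j\<in>UNIV. ennreal ((phi_t w x y j)^2) * pmf (jdist w) j)"
    by (rule nn_integral_measure_pmf_support) auto
  also have "\<dots> = ennreal (\<Sum>j\<in>UNIV. pj w j * (phi_t w x y j)^2)"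
    using False by (simp add: pmf_jdist ennreal_mult[symmetric] pj_def mult.commute)
  also have "\<dots> \<le> ennreal (4 * B^2)"
  proof (rule ennreal_leI)
    define a where "a = (\<lambda>j. (w $ j / pj w j) * x $ j)"
    have pjnn: "0 \<le> pj w j" for j unfolding pj_def by simp
    have 1: "pj w j * (phi_t w x y j)^2 \<le> 2 * (pj w j * (a j)^2) + 2 * pj w j * y^2" for j
    proof -
      have "(phi_t w x y j)^2 \<le> 2 * (a j)^2 + 2 * y^2"
      proof -
        have e: "2 * (a j)^2 + 2 * y^2 - (a j - y)^2 = (a j + y)^2" by (simp add: power2_eq_square algebra_simps)
        have "0 \<le> (a j + y)^2" by simp
        moreover have "phi_t w x y j = a j - y" by (simp add: phi_t_def a_def)
        ultimately show ?thesis using e zero_le_power2[of "a j + y"] by (simp only:)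
      qed
      then have "pj w j * (phi_t w x y j)^2 \<le> pj w j * (2 * (a j)^2 + 2 * y^2)"
        using pjnn[of j] by (rule mult_left_mono)
      then show ?thesis by (simp add: algebra_simps)
    qed
    have 2: "pj w j * (a j)^2 \<le> (norm w)^2 * (x $ j)^2" for j
    proof (cases "w $ j = 0")
      case True then show ?thesis by (simp add: a_def)
    next
      case wj: False
      have nw: "norm w \<noteq> 0" using False by simp
      have "pj w j * (a j)^2 = (norm w)^2 * (x $ j)^2"
        unfolding a_def pj_def using wj nw by (simp add: field_simps power2_eq_square)
      then show ?thesis by simp
    qed
    have "(\<Sum>j\<in>UNIV. pj w j * (phi_t w x y j)^2) \<le> (\<Sum>j\<in>UNIV. 2 * (pj w j * (a j)^2) + 2 * pj w j * y^2)"
      by (intro sum_mono 1)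
    also have "\<dots> = 2 * (\<Sum>j\<in>UNIV. pj w j * (a j)^2) + 2 * y^2 * (\<Sum>j\<in>UNIV. pj w j)"
      by (simp add: sum.distrib sum_distrib_left sum_distrib_right mult_ac)
    also have "\<dots> \<le> 2 * (\<Sum>j\<in>UNIV. (norm w)^2 * (x $ j)^2) + 2 * y^2 * 1"
      using pj_sum[OF False] by (simp add: sum_mono 2)
    also have "\<dots> = 2 * ((norm w)^2 * (norm x)^2) + 2 * y^2"
      by (simp add: norm_sq_vec sum_distrib_left)
    also have "\<dots> \<le> 2 * (B^2 * 1) + 2 * B^2"
    proof -
      have "(norm w)^2 \<le> B^2" using w by (simp add: power_mono)
      moreover have "(norm x)^2 \<le> 1" using x by (simp add: power_le_one)
      moreover have "y^2 \<le> B^2"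
      proof -
        have "\<bar>y\<bar>^2 \<le> B^2" using y by (intro power_mono) auto
        then show ?thesis by simp
      qed
      moreover have "(norm w)^2 * (norm x)^2 \<le> B^2 * 1"
        using calculation by (intro mult_mono) auto
      ultimately show ?thesis by linarith
    qed
    finally show "(\<Sum>j\<in>UNIV. pj w j * (phi_t w x y j)^2) \<le> 4 * B^2" by simp
  qed
  finally show ?thesis .
qed
lemma Exr_nonneg: "0 \<le> Exr Q x"
  unfolding Exr_def by (intro sum_nonneg) auto

lemma L_marg:
  fixes Q :: "'d::finite pmf"
  assumes r: "r < k"
  shows "(\<integral>\<^sup>+a. ennreal ((norm (xt_r Q x (fst a r)))^2) \<partial>alg_pmf Q k w) = ennreal (Exr Q x)"
proof -
  have "(\<integral>\<^sup>+a. ennreal ((norm (xt_r Q x (fst a r)))^2) \<partial>alg_pmf Q k w)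
      = (\<integral>\<^sup>+I. ennreal ((norm (xt_r Q x (I r)))^2) \<partial>idx_pmf Q k)"
    unfolding alg_pmf_def nn_integral_pair_pmf' by (simp add: measure_pmf.emeasure_space_1)
  also have "\<dots> = (\<integral>\<^sup>+i. ennreal ((norm (xt_r Q x i))^2) \<partial>map_pmf (\<lambda>I. I r) (idx_pmf Q k))"
    by simp
  also have "map_pmf (\<lambda>I. I r) (idx_pmf Q k) = Q"
    unfolding idx_pmf_def using r by (subst Pi_pmf_component) auto
  also have "(\<integral>\<^sup>+i. ennreal ((norm (xt_r Q x i))^2) \<partial>Q) = (\<Sum>i\<in>UNIV. ennreal ((norm (xt_r Q x i))^2) * pmf Q i)"
    by (rule nn_integral_measure_pmf_support) auto
  also have "\<dots> = ennreal (Exr Q x)"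
    unfolding Exr_def by (simp add: ennreal_mult[symmetric] mult.commute)
  finally show ?thesis .
qed

lemma L_main:
  fixes Q :: "'d::finite pmf" and w x :: "real^'d"
  assumes w: "norm w \<le> B" and x: "norm x \<le> 1" and y: "\<bar>y\<bar> \<le> B" and k: "k > 0"
  shows "(\<integral>\<^sup>+a. ennreal ((norm (g_t Q k w x y (fst a) (snd a)))^2) \<partial>alg_pmf Q k w)
     \<le> ennreal (4 * B^2) * (ennreal (Exr Q x) / ennreal (real k) + 1)"
proof -
  have "(\<integral>\<^sup>+a. ennreal ((norm (g_t Q k w x y (fst a) (snd a)))^2) \<partial>alg_pmf Q k w)
      = (\<integral>\<^sup>+I. \<integral>\<^sup>+j. ennreal ((norm (xt Q k x I))^2) * ennreal ((phi_t w x y j)^2) \<partial>jdist w \<partial>idx_pmf Q k)"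
    unfolding alg_pmf_def nn_integral_pair_pmf' g_t_def
    by (simp add: power_mult_distrib ennreal_mult[symmetric] mult.commute)
  also have "\<dots> = (\<integral>\<^sup>+I. ennreal ((norm (xt Q k x I))^2) * (\<integral>\<^sup>+j. ennreal ((phi_t w x y j)^2) \<partial>jdist w) \<partial>idx_pmf Q k)"
    by (simp add: nn_integral_cmult)
  also have "\<dots> \<le> (\<integral>\<^sup>+I. ennreal ((norm (xt Q k x I))^2) * ennreal (4 * B^2) \<partial>idx_pmf Q k)"
    by (intro nn_integral_mono mult_left_mono L_phi[OF w x y]) auto
  also have "\<dots> = ennreal (4 * B^2) * (\<integral>\<^sup>+I. ennreal ((norm (xt Q k x I))^2) \<partial>idx_pmf Q k)"
    by (simp add: nn_integral_cmult mult.commute)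
  also have "(\<integral>\<^sup>+I. ennreal ((norm (xt Q k x I))^2) \<partial>idx_pmf Q k) = ennreal (\<integral>I. (norm (xt Q k x I))^2 \<partial>idx_pmf Q k)"
  proof (rule nn_integral_eq_integral)
    have finP: "finite (set_pmf (idx_pmf Q k))" unfolding idx_pmf_def by (rule finite_set_Pi_pmf_fin)
    show "integrable (measure_pmf (idx_pmf Q k)) (\<lambda>I. (norm (xt Q k x I))^2)"
      by (rule integrable_measure_pmf_finite[OF finP])
  qed auto
  also have "ennreal (4 * B^2) * \<dots> \<le> ennreal (4 * B^2) * ennreal (Exr Q x / real k + 1)"
    by (intro mult_left_mono ennreal_leI L_var k x) auto
  also have "ennreal (Exr Q x / real k + 1) = ennreal (Exr Q x) / ennreal (real k) + 1"
    using k Exr_nonneg[of Q x] by (simp add: ennreal_plus divide_ennreal)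
  finally show ?thesis .
qed
lemma next_w_meas[measurable (raw)]:
  assumes [measurable]: "f \<in> borel_measurable M" "g \<in> borel_measurable M" "h \<in> borel_measurable M"
  shows "(\<lambda>p. next_w B \<eta> Q k (f p) (g p) (h p) I j) \<in> borel_measurable M"
  unfolding next_w_def Let_def g_t_def phi_t_def pj_def xt_def xt_r_def
  by measurable

lemma pmf_jdist_meas[measurable (raw)]:
  assumes [measurable]: "f \<in> borel_measurable M"
  shows "(\<lambda>p. pmf (jdist (f p)) j) \<in> borel_measurable M"
proof -
  have "(\<lambda>p. pmf (jdist (f p)) j) = (\<lambda>p. if f p = 0 then pmf (jdist 0) j else (f p $ j)^2 / (norm (f p))^2)"
    by (auto simp: pmf_jdist pj_def)
  also have "\<dots> \<in> borel_measurable M" by measurable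
  finally show ?thesis .
qed

lemma norm_next_w: "B > 0 \<Longrightarrow> norm (next_w B \<eta> Q k w x y I j) \<le> B"
  unfolding next_w_def Let_def
  by (cases "norm (w - \<eta> *\<^sub>R g_t Q k w x y I j) \<le> B") (auto simp: max_def)

definition Kn where
  "Kn B \<eta> Q k w z = distr (measure_pmf (alg_pmf Q k w)) borel (\<lambda>(I,j). next_w B \<eta> Q k w (fst z) (snd z) I j)"

lemma step_alt: "step D Q k \<eta> B w = Giry_Monad.bind D (\<lambda>z. Kn B \<eta> Q k w z)"
  unfolding step_def Kn_def by (simp add: case_prod_beta')

lemma finite_set_idx: "finite (set_pmf (idx_pmf Q k))"
  unfolding idx_pmf_def by (rule finite_set_Pi_pmf_fin)

lemma emeasure_Kn:
  fixes Q :: "'d::finite pmf"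
  assumes A: "A \<in> sets borel"
  shows "emeasure (Kn B \<eta> Q k w z) A = (\<Sum>a\<in>set_pmf (idx_pmf Q k) \<times> UNIV.
      ennreal (pmf (idx_pmf Q k) (fst a) * pmf (jdist w) (snd a)) * indicator A (next_w B \<eta> Q k w (fst z) (snd z) (fst a) (snd a)))"
proof -
  let ?f = "(\<lambda>(I,j). next_w B \<eta> Q k w (fst z) (snd z) I j)"
  have "emeasure (Kn B \<eta> Q k w z) A = emeasure (measure_pmf (alg_pmf Q k w)) (?f -` A)"
    unfolding Kn_def using A by (subst emeasure_distr) auto
  also have "\<dots> = (\<integral>\<^sup>+a. indicator (?f -` A) a \<partial>alg_pmf Q k w)"
    by simp
  also have "\<dots> = (\<Sum>a\<in>set_pmf (idx_pmf Q k) \<times> UNIV. indicator (?f -` A) a * ennreal (pmf (alg_pmf Q k w) a))"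
    by (rule nn_integral_measure_pmf_support) (auto simp: finite_set_idx alg_pmf_def)
  also have "\<dots> = (\<Sum>a\<in>set_pmf (idx_pmf Q k) \<times> UNIV.
      ennreal (pmf (idx_pmf Q k) (fst a) * pmf (jdist w) (snd a)) * indicator A (next_w B \<eta> Q k w (fst z) (snd z) (fst a) (snd a)))"
    by (intro sum.cong refl) (auto simp: alg_pmf_def pmf_pair mult.commute split: split_indicator)
  finally show ?thesis .
qed

lemma Kn_meas:
  fixes D :: "((real^'d::finite) \<times> real) measure" and Q :: "'d pmf"
  assumes D: "sets D = sets borel"
  shows "(\<lambda>p. Kn B \<eta> Q k (fst p) (snd p)) \<in> (borel \<Otimes>\<^sub>M D) \<rightarrow>\<^sub>M subprob_algebra borel"
proof (rule measurable_subprob_algebra)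
  fix p
  show "subprob_space (Kn B \<eta> Q k (fst p) (snd p))"
    unfolding Kn_def by (intro prob_space_imp_subprob_space prob_space.prob_space_distr) (auto simp: measure_pmf.prob_space_axioms)
  show "sets (Kn B \<eta> Q k (fst p) (snd p)) = sets borel"
    unfolding Kn_def by simp
next
  fix A :: "(real^'d) set" assume A[measurable]: "A \<in> sets borel"
  have eq: "(\<lambda>p. emeasure (Kn B \<eta> Q k (fst p) (snd p)) A) = (\<lambda>p. \<Sum>a\<in>set_pmf (idx_pmf Q k) \<times> UNIV.
      ennreal (pmf (idx_pmf Q k) (fst a) * pmf (jdist (fst p)) (snd a)) * indicator A (next_w B \<eta> Q k (fst p) (fst (snd p)) (snd (snd p)) (fst a) (snd a)))"
    using A by (simp add: emeasure_Kn)
  have m: "(\<lambda>p. \<Sum>a\<in>set_pmf (idx_pmf Q k) \<times> UNIV.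
      ennreal (pmf (idx_pmf Q k) (fst a) * pmf (jdist (fst p)) (snd a)) * indicator A (next_w B \<eta> Q k (fst p) (fst (snd p)) (snd (snd p)) (fst a) (snd a)))
     \<in> borel_measurable (borel \<Otimes>\<^sub>M (borel \<Otimes>\<^sub>M borel))"
    by measurable
  have D': "sets D = sets (borel \<Otimes>\<^sub>M borel)" unfolding borel_prod by (rule D)
  show "(\<lambda>p. emeasure (Kn B \<eta> Q k (fst p) (snd p)) A) \<in> borel_measurable (borel \<Otimes>\<^sub>M D)"
    unfolding eq by (subst measurable_cong_sets[OF sets_pair_measure_cong[OF refl D'] refl]) (rule m)
qed

lemma step_meas:
  fixes D :: "((real^'d::finite) \<times> real) measure" and Q :: "'d pmf"
  assumes D: "sets D = sets borel" and P: "prob_space D"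
  shows "step D Q k \<eta> B \<in> borel \<rightarrow>\<^sub>M prob_algebra borel"
proof (rule measurable_prob_algebraI)
  have KD: "(\<lambda>z. Kn B \<eta> Q k w z) \<in> D \<rightarrow>\<^sub>M subprob_algebra borel" for w
    using measurable_Pair2[OF Kn_meas[OF D], of w] by simp
  have Dsp: "D \<in> space (subprob_algebra D)"
    using P by (simp add: space_subprob_algebra prob_space_imp_subprob_space)
  show "step D Q k \<eta> B \<in> borel \<rightarrow>\<^sub>M subprob_algebra borel"
    unfolding step_alt[abs_def]
    by (rule measurable_bind[OF measurable_const[OF Dsp]]) (use Kn_meas[OF D] in simp)
  fix w :: "real^'d"
  show "prob_space (step D Q k \<eta> B w)"
    unfolding step_alt
    by (rule prob_space.prob_space_bind[OF P _ KD])
       (auto simp: Kn_def measure_pmf.prob_space_axioms intro!: AE_I2 prob_space.prob_space_distr)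
qed
lemma w_law_props:
  fixes D :: "((real^'d::finite) \<times> real) measure" and Q :: "'d pmf"
  assumes D: "sets D = sets borel" and P: "prob_space D" and B: "B > 0" and w1: "norm w1 \<le> B"
  shows "w_law D Q k \<eta> B w1 n \<in> space (prob_algebra borel) \<and> (AE w in w_law D Q k \<eta> B w1 n. norm w \<le> B)"
proof (induction n)
  case 0
  have "return borel w1 \<in> space (prob_algebra borel)"
    by (rule measurable_space[OF measurable_return_prob_space]) simp
  moreover have "AE w in return borel w1. norm w \<le> B"
    using w1 by (subst AE_return) auto
  ultimately show ?case unfolding w_law.simps(1) by simp
next
  case (Suc n)
  let ?M = "w_law D Q k \<eta> B w1 n"
  have S: "step D Q k \<eta> B \<in> borel \<rightarrow>\<^sub>M prob_algebra borel" by (rule step_meas[OF D P])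
  have sp: "?M \<in> space (prob_algebra borel)" using Suc.IH by simp
  have Msets: "sets ?M = sets borel" using sp by (simp add: space_prob_algebra)
  have "Giry_Monad.bind ?M (step D Q k \<eta> B) \<in> space (prob_algebra borel)"
    using prob_space_bind'[OF sp S] sets_bind'[OF sp S] by (simp add: space_prob_algebra)
  moreover have "AE w in Giry_Monad.bind ?M (step D Q k \<eta> B). norm w \<le> B"
  proof -
    have S': "step D Q k \<eta> B \<in> ?M \<rightarrow>\<^sub>M subprob_algebra borel"
      using measurable_prob_algebraD[OF S] by (simp add: measurable_cong_sets[OF Msets refl])
    have stepAE: "AE y in step D Q k \<eta> B w. norm y \<le> B" for w
    proof -
      have KD: "(\<lambda>z. Kn B \<eta> Q k w z) \<in> D \<rightarrow>\<^sub>M subprob_algebra borel"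
        using measurable_Pair2[OF Kn_meas[OF D], of w] by simp
      have pr: "Measurable.pred borel (\<lambda>y::real^'d. norm y \<le> B)" by measurable
      have Kae: "AE y in Kn B \<eta> Q k w z. norm y \<le> B" for z
        unfolding Kn_def by (subst AE_distr_iff) (auto simp: norm_next_w[OF B])
      show ?thesis
        unfolding step_alt AE_bind[OF KD pr] by (rule AE_I2) (rule Kae)
    qed
    have pr: "Measurable.pred borel (\<lambda>y::real^'d. norm y \<le> B)" by measurable
    show ?thesis
      unfolding AE_bind[OF S' pr] by (rule AE_I2) (rule stepAE)
  qed
  ultimately show ?case unfolding w_law.simps(2) by simp
qed

lemma norm_xt_r_sq: "(norm (xt_r Q x i))^2 = (x $ i / pmf Q i)^2"
proof -
  have "(\<lambda>c. (xt_r Q x i $ c)^2) = (\<lambda>c. if c = i then (x $ i / pmf Q i)^2 else 0)"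
    by (auto simp: xt_r_comp)
  then show ?thesis unfolding norm_sq_vec by (simp only:) simp
qed

lemma Exr_meas:
  fixes D :: "((real^'d::finite) \<times> real) measure" and Q :: "'d pmf"
  assumes D: "sets D = sets borel"
  shows "(\<lambda>z. ennreal (Exr Q (fst z))) \<in> borel_measurable D"
proof -
  have "(\<lambda>z. ennreal (Exr Q (fst z))) \<in> borel_measurable (borel \<Otimes>\<^sub>M borel :: ((real^'d) \<times> real) measure)"
  proof -
    have "(\<lambda>z. ennreal (Exr Q (fst z))) = (\<lambda>z. ennreal (\<Sum>i\<in>UNIV. pmf Q i * (fst z $ i / pmf Q i)^2))"
      unfolding Exr_def norm_xt_r_sq ..
    also have "\<dots> \<in> borel_measurable (borel \<Otimes>\<^sub>M borel)" by measurable
    finally show ?thesis .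
  qed
  moreover have D': "sets D = sets (borel \<Otimes>\<^sub>M borel)" unfolding borel_prod by (rule D)
  ultimately show ?thesis by (simp add: measurable_cong_sets[OF D' refl])
qed

theorem lemma3:
  fixes D :: "((real^'d::finite) \<times> real) measure" and Q :: "'d pmf"
    and k :: nat and B \<eta> :: real and w1 :: "real^'d" and t r :: nat
  assumes "prob_space D" and "sets D = sets borel"
    and "AE z in D. norm (fst z) \<le> 1 \<and> \<bar>snd z\<bar> \<le> B"
    and "B > 0" and "\<eta> > 0" and "k > 0"
    and "w1 \<noteq> 0" and "norm w1 \<le> B"
    and "t \<ge> 1" and "r < k"
  shows "(\<integral>\<^sup>+ w. \<integral>\<^sup>+ z. \<integral>\<^sup>+ a.
            ennreal ((norm (g_t Q k w (fst z) (snd z) (fst a) (snd a)))^2)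
          \<partial>measure_pmf (alg_pmf Q k w) \<partial>D \<partial>w_law D Q k \<eta> B w1 (t - 1))
     \<le> ennreal (4 * B^2) *
        ((\<integral>\<^sup>+ w. \<integral>\<^sup>+ z. \<integral>\<^sup>+ a.
            ennreal ((norm (xt_r Q (fst z) (fst a r)))^2)
          \<partial>measure_pmf (alg_pmf Q k w) \<partial>D \<partial>w_law D Q k \<eta> B w1 (t - 1)) / ennreal (real k) + 1)"
proof -
  note P = assms(1) and Ds = assms(2) and AEz = assms(3) and Bp = assms(4) and kp = assms(6)
  let ?M = "w_law D Q k \<eta> B w1 (t - 1)"
  have Mprops: "?M \<in> space (prob_algebra borel) \<and> (AE w in ?M. norm w \<le> B)"
    by (rule w_law_props[OF Ds P Bp assms(8)])
  then have Mp: "prob_space ?M" and AEw: "AE w in ?M. norm w \<le> B"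
    by (auto simp: space_prob_algebra)
  define c where "c = (\<integral>\<^sup>+z. ennreal (Exr Q (fst z)) \<partial>D)"
  have meas: "(\<lambda>z. ennreal (Exr Q (fst z))) \<in> borel_measurable D" by (rule Exr_meas[OF Ds])
  have R: "(\<integral>\<^sup>+ w. \<integral>\<^sup>+ z. \<integral>\<^sup>+ a. ennreal ((norm (xt_r Q (fst z) (fst a r)))^2)
          \<partial>measure_pmf (alg_pmf Q k w) \<partial>D \<partial>?M) = c"
  proof -
    have "(\<integral>\<^sup>+ z. \<integral>\<^sup>+ a. ennreal ((norm (xt_r Q (fst z) (fst a r)))^2) \<partial>measure_pmf (alg_pmf Q k w) \<partial>D) = c" for w
      unfolding c_def by (intro nn_integral_cong L_marg[OF assms(10)])
    then show ?thesis by (simp add: prob_space.emeasure_space_1[OF Mp, simplified])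
  qed
  have inner: "(\<integral>\<^sup>+ z. \<integral>\<^sup>+ a. ennreal ((norm (g_t Q k w (fst z) (snd z) (fst a) (snd a)))^2)
          \<partial>measure_pmf (alg_pmf Q k w) \<partial>D) \<le> ennreal (4 * B^2) * (c / ennreal (real k) + 1)"
    if w: "norm w \<le> B" for w
  proof -
    have "(\<integral>\<^sup>+ z. \<integral>\<^sup>+ a. ennreal ((norm (g_t Q k w (fst z) (snd z) (fst a) (snd a)))^2)
          \<partial>measure_pmf (alg_pmf Q k w) \<partial>D) \<le>
          (\<integral>\<^sup>+ z. ennreal (4 * B^2) * (ennreal (Exr Q (fst z)) * inverse (ennreal (real k)) + 1) \<partial>D)"
      using AEz by (intro nn_integral_mono_AE) (auto simp: divide_ennreal_def intro!: L_main[OF w _ _ kp, unfolded divide_ennreal_def])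
    also have "\<dots> = ennreal (4 * B^2) * ((\<integral>\<^sup>+ z. ennreal (Exr Q (fst z)) * inverse (ennreal (real k)) \<partial>D) + (\<integral>\<^sup>+ z. 1 \<partial>D))"
      using meas by (subst nn_integral_cmult) (auto simp: nn_integral_add)
    also have "\<dots> = ennreal (4 * B^2) * (c / ennreal (real k) + 1)"
      using meas by (simp add: nn_integral_multc c_def divide_ennreal_def prob_space.emeasure_space_1[OF P])
    finally show ?thesis .
  qed
  have "(\<integral>\<^sup>+ w. \<integral>\<^sup>+ z. \<integral>\<^sup>+ a.
            ennreal ((norm (g_t Q k w (fst z) (snd z) (fst a) (snd a)))^2)
          \<partial>measure_pmf (alg_pmf Q k w) \<partial>D \<partial>?M) \<le> (\<integral>\<^sup>+ w. ennreal (4 * B^2) * (c / ennreal (real k) + 1) \<partial>?M)"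
    using AEw by (intro nn_integral_mono_AE) (auto elim!: eventually_mono intro: inner)
  also have "\<dots> = ennreal (4 * B^2) * (c / ennreal (real k) + 1)"
    by (simp add: prob_space.emeasure_space_1[OF Mp, simplified])
  finally show ?thesis unfolding R .
qed
end
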